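(* Let $\mathbb{F}\in\{\mathbb{R},\mathbb{C}\}$, $M>N\ge1$, and let $\mathcal{P}(M,N)$ be the set of Parseval frames for $\mathbb{F}^N$ with $M$ vectors. Let $c_{M,N}=\sqrt{\frac{N(M-N)}{M^2(M-1)}}$ and for $\Phi\in\mathcal{P}(M,N)$ define $$AD(\Phi)=\sum_{i\neq j}\big(|\langle\varphi_i,\varphi_j\rangle|-c_{M,N}\big)^2,\qquad EAD(\Phi)=\sum_{i=1}^M\Big(\|\varphi_i\|^2-\frac{N}{M}\Big)^2+AD(\Phi).$$ If $\Phi$ is a minimizer of $AD$ over $\mathcal{P}(M,N)$ which is equal norm (i.e. $\|\varphi_i\|=\|\varphi_j\|$ for all $i,j$), then $\Phi$ is also a minimizer of $EAD$ over $\mathcal{P}(M,N)$, and every minimizer of $EAD$ over $\mathcal{P}(M,N)$ is equal norm.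
   Context: A Parseval frame for $\mathbb{F}^N$ is a family $\{\varphi_i\}_{i=1}^M\subseteq\mathbb{F}^N$ whose $N\times M$ matrix $\Phi$ (columns $\varphi_i$) satisfies $\Phi\Phi^*=I$. *)

theory Defs
  imports "HOL-Analysis.Analysis" "Jordan_Normal_Form.Conjugate"
begin

text \<open>A family of M vectors in F^N is represented by Phi :: nat => nat => 'a, where
  Phi i k is the k-th coordinate (k < N) of the i-th vector (i < M).
  F is real or complex; conjugate is identity on real and cnj on complex.\<close>

definition inner_F :: "nat \<Rightarrow> (nat \<Rightarrow> 'a::conjugatable_field) \<Rightarrow> (nat \<Rightarrow> 'a) \<Rightarrow> 'a" where
  "inner_F N x y = (\<Sum>k<N. x k * conjugate (y k))"

text \<open>Parseval frame: the N x M synthesis matrix Phi (columns phi_i) satisfies Phi Phi^* = I,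
  i.e. entry (k,l) of Phi Phi^* is sum over i of Phi_{k i} * conj(Phi_{l i}).\<close>
definition parseval_frames :: "nat \<Rightarrow> nat \<Rightarrow> (nat \<Rightarrow> nat \<Rightarrow> 'a::conjugatable_field) set" where
  "parseval_frames M N = {Phi. \<forall>k<N. \<forall>l<N.
      (\<Sum>i<M. Phi i k * conjugate (Phi i l)) = (if k = l then 1 else 0)}"

definition c_MN :: "nat \<Rightarrow> nat \<Rightarrow> real" where
  "c_MN M N = sqrt (real N * (real M - real N) / ((real M)^2 * (real M - 1)))"

definition AD :: "nat \<Rightarrow> nat \<Rightarrow> (nat \<Rightarrow> nat \<Rightarrow> 'a::{conjugatable_field,real_normed_field}) \<Rightarrow> real" where
  "AD M N Phi = (\<Sum>i<M. \<Sum>j\<in>{..<M} - {i}.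
      (norm (inner_F N (Phi i) (Phi j)) - c_MN M N)^2)"

definition sqnorm_F :: "nat \<Rightarrow> (nat \<Rightarrow> 'a::real_normed_field) \<Rightarrow> real" where
  "sqnorm_F N x = (\<Sum>k<N. (norm (x k))^2)"

definition EAD :: "nat \<Rightarrow> nat \<Rightarrow> (nat \<Rightarrow> nat \<Rightarrow> 'a::{conjugatable_field,real_normed_field}) \<Rightarrow> real" where
  "EAD M N Phi = (\<Sum>i<M. (sqnorm_F N (Phi i) - real N / real M)^2) + AD M N Phi"

definition is_minimizer :: "('b \<Rightarrow> real) \<Rightarrow> 'b set \<Rightarrow> 'b \<Rightarrow> bool" where
  "is_minimizer f S x \<longleftrightarrow> x \<in> S \<and> (\<forall>y\<in>S. f x \<le> f y)"

definition equal_norm :: "nat \<Rightarrow> nat \<Rightarrow> (nat \<Rightarrow> nat \<Rightarrow> 'a::real_normed_field) \<Rightarrow> bool" where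
  "equal_norm M N Phi \<longleftrightarrow> (\<forall>i<M. \<forall>j<M. sqnorm_F N (Phi i) = sqnorm_F N (Phi j))"

end

theory Submission
  imports Defs
begin

lemma sum_sqnorm:
  fixes Phi :: "nat \<Rightarrow> nat \<Rightarrow> 'a::{conjugatable_field,real_normed_field}"
  assumes H: "\<And>x::'a. x * conjugate x = of_real ((norm x)^2)"
    and P: "Phi \<in> parseval_frames M N"
  shows "(\<Sum>i<M. sqnorm_F N (Phi i)) = real N"
proof -
  have "(of_real (\<Sum>i<M. sqnorm_F N (Phi i)) :: 'a)
      = (\<Sum>i<M. \<Sum>k<N. Phi i k * conjugate (Phi i k))"
    by (simp add: sqnorm_F_def H)
  also have "\<dots> = (\<Sum>k<N. \<Sum>i<M. Phi i k * conjugate (Phi i k))"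
    by (rule sum.swap)
  also have "\<dots> = (\<Sum>k<N. (1::'a))"
    using P by (intro sum.cong) (auto simp: parseval_frames_def)
  also have "\<dots> = of_real (real N)" by simp
  finally show ?thesis using of_real_eq_iff by blast
qed

lemma main_generic:
  fixes Phi :: "nat \<Rightarrow> nat \<Rightarrow> 'a::{conjugatable_field,real_normed_field}"
  assumes H: "\<And>x::'a. x * conjugate x = of_real ((norm x)^2)"
    and NM: "N < M"
    and min: "is_minimizer (AD M N) (parseval_frames M N) Phi" and en: "equal_norm M N Phi"
  shows "is_minimizer (EAD M N) (parseval_frames M N) Phi \<and>
    (\<forall>Psi :: nat \<Rightarrow> nat \<Rightarrow> 'a. is_minimizer (EAD M N) (parseval_frames M N) Psi \<longrightarrow> equal_norm M N Psi)"
proof -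
  have M0: "M > 0" using NM by simp
  have PPhi: "Phi \<in> parseval_frames M N" using min by (simp add: is_minimizer_def)
  have s: "(\<Sum>i<M. sqnorm_F N (Phi i)) = real N" using sum_sqnorm[OF H PPhi] .
  have eq0: "\<forall>i<M. sqnorm_F N (Phi i) = sqnorm_F N (Phi 0)" using en M0 unfolding equal_norm_def by blast
  have "(\<Sum>i<M. sqnorm_F N (Phi i)) = (\<Sum>i<M. sqnorm_F N (Phi 0))"
    by (rule sum.cong[OF refl]) (use eq0 in blast)
  hence "(\<Sum>i<M. sqnorm_F N (Phi i)) = real M * sqnorm_F N (Phi 0)" by simp
  hence a0: "sqnorm_F N (Phi 0) = real N / real M" using s M0 by (simp add: field_simps)
  have "\<forall>i<M. sqnorm_F N (Phi i) = real N / real M"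
    using a0 eq0 by metis
  hence E1: "EAD M N Phi = AD M N Phi" by (simp add: EAD_def)
  have F0: "(\<Sum>i<M. (sqnorm_F N (Psi i) - real N / real M)^2) \<ge> 0" for Psi :: "nat \<Rightarrow> nat \<Rightarrow> 'a"
    by (intro sum_nonneg) simp
  have ADle: "AD M N Phi \<le> AD M N Psi" if "Psi \<in> parseval_frames M N" for Psi :: "nat \<Rightarrow> nat \<Rightarrow> 'a"
    using min that unfolding is_minimizer_def by blast
  have A: "is_minimizer (EAD M N) (parseval_frames M N) Phi"
    unfolding is_minimizer_def
  proof (intro conjI ballI PPhi)
    fix Psi :: "nat \<Rightarrow> nat \<Rightarrow> 'a" assume "Psi \<in> parseval_frames M N"
    thus "EAD M N Phi \<le> EAD M N Psi" using ADle[of Psi] F0[of Psi] E1 unfolding EAD_def by linarith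
  qed
  have B: "equal_norm M N Psi" if "is_minimizer (EAD M N) (parseval_frames M N) Psi" for Psi :: "nat \<Rightarrow> nat \<Rightarrow> 'a"
  proof -
    have PP: "Psi \<in> parseval_frames M N" and le: "EAD M N Psi \<le> EAD M N Phi"
      using that PPhi by (auto simp: is_minimizer_def)
    have "(\<Sum>i<M. (sqnorm_F N (Psi i) - real N / real M)^2) \<le> 0"
      using le E1 ADle[OF PP] by (simp add: EAD_def)
    hence "(\<Sum>i<M. (sqnorm_F N (Psi i) - real N / real M)^2) = 0" using F0[of Psi] by linarith
    hence "\<forall>i\<in>{..<M}. (sqnorm_F N (Psi i) - real N / real M)^2 = 0"
      by (subst (asm) sum_nonneg_eq_0_iff) auto
    thus ?thesis by (simp add: equal_norm_def)
  qed
  show ?thesis using A B by blast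
qed

lemma H_real: "(x::real) * conjugate x = of_real ((norm x)^2)"
  by (simp add: power2_eq_square)

lemma H_complex: "(x::complex) * conjugate x = of_real ((norm x)^2)"
  using complex_norm_square[of x] by simp

theorem proposition6:
  fixes M N :: nat
  assumes "1 \<le> N" and "N < M"
  shows "(\<forall>Phi :: nat \<Rightarrow> nat \<Rightarrow> real.
            is_minimizer (AD M N) (parseval_frames M N) Phi \<and> equal_norm M N Phi \<longrightarrow>
              is_minimizer (EAD M N) (parseval_frames M N) Phi \<and>
              (\<forall>Psi :: nat \<Rightarrow> nat \<Rightarrow> real. is_minimizer (EAD M N) (parseval_frames M N) Psi \<longrightarrow> equal_norm M N Psi))
       \<and> (\<forall>Phi :: nat \<Rightarrow> nat \<Rightarrow> complex.
            is_minimizer (AD M N) (parseval_frames M N) Phi \<and> equal_norm M N Phi \<longrightarrow>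
              is_minimizer (EAD M N) (parseval_frames M N) Phi \<and>
              (\<forall>Psi :: nat \<Rightarrow> nat \<Rightarrow> complex. is_minimizer (EAD M N) (parseval_frames M N) Psi \<longrightarrow> equal_norm M N Psi))"
  using main_generic[OF H_real assms(2)] main_generic[OF H_complex assms(2)] by blast

end
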